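(* For any $n\in\mathbb{N}$ and $A>0$, there exists $f\in C^2[-1,1]$ with $f\le0$ on $[-1,0]$ and $f\ge0$ on $[0,1]$, such that every algebraic polynomial $P_n$ of degree $\le n$ with $P_n\le0$ on $[-1,0]$, $P_n\ge0$ on $[0,1]$ and $P_n^{(i)}(0)=f^{(i)}(0)$ for $i=0,1$ obeys $$\|f-P_n\|>A\,\omega_4(f'',1).$$
   Context: $\|\cdot\|$ is the sup norm on $[-1,1]$; $\omega_4(g,t)$ is the fourth modulus of smoothness of $g$ on $[-1,1]$. *)

theory Defs
  imports "HOL-Analysis.Analysis" "HOL-Computational_Algebra.Polynomial"
begin

definition sup_norm11 :: "(real \<Rightarrow> real) \<Rightarrow> real" where
  "sup_norm11 g = (SUP x\<in>{-1..1}. \<bar>g x\<bar>)"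

definition diff4 :: "(real \<Rightarrow> real) \<Rightarrow> real \<Rightarrow> real \<Rightarrow> real" where
  "diff4 g h x = (\<Sum>i\<le>4. (-1) ^ (4 - i) * real (4 choose i) * g (x + real i * h))"

definition omega4 :: "(real \<Rightarrow> real) \<Rightarrow> real \<Rightarrow> real" where
  "omega4 g t = (SUP (h, x)\<in>{(h, x). 0 < h \<and> h \<le> t \<and> -1 \<le> x \<and> x + 4 * h \<le> 1}.
                    \<bar>diff4 g h x\<bar>)"

definition C2_on11 :: "(real \<Rightarrow> real) \<Rightarrow> (real \<Rightarrow> real) \<Rightarrow> (real \<Rightarrow> real) \<Rightarrow> bool" where
  "C2_on11 f f1 f2 \<longleftrightarrow>
     (\<forall>x\<in>{-1..1}. (f has_real_derivative f1 x) (at x within {-1..1})) \<and>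
     (\<forall>x\<in>{-1..1}. (f1 has_real_derivative f2 x) (at x within {-1..1})) \<and>
     continuous_on {-1..1} f2"

end

theory Submission
  imports Defs
begin


definition lag :: "real set \<Rightarrow> real \<Rightarrow> real poly" where
  "lag X x = smult (1 / (\<Prod>y\<in>X-{x}. (x - y))) (\<Prod>y\<in>X-{x}. [:-y, 1:])"

lemma poly_lag:
  assumes "finite X" "x \<in> X" "z \<in> X"
  shows "poly (lag X x) z = (if z = x then 1 else 0)"
proof (cases "z = x")
  case True
  have "(\<Prod>y\<in>X-{x}. (x - y)) \<noteq> 0"
    using assms by (subst prod_zero_iff) auto
  then show ?thesis using True by (simp add: lag_def poly_prod)
next
  case False
  have "(\<Prod>y\<in>X-{x}. (z - y)) = 0"
    using assms False by (subst prod_zero_iff) auto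
  then show ?thesis using False by (simp add: lag_def poly_prod)
qed

lemma degree_lag:
  assumes "finite X" "x \<in> X"
  shows "degree (lag X x) < card X"
proof -
  have "degree (\<Prod>y\<in>X-{x}. [:-y, 1:]) \<le> (\<Sum>y\<in>X-{x}. degree [:-y, (1::real):])"
    using degree_prod_sum_le[of "X-{x}" "\<lambda>y. [:-y, (1::real):]"] assms by (simp add: o_def)
  also have "\<dots> = card (X - {x})" by simp
  also have "\<dots> < card X"
  proof -
    have "card X > 0" using assms card_gt_0_iff by blast
    then show ?thesis using assms by (simp add: card_Diff_singleton)
  qed
  finally show ?thesis unfolding lag_def using degree_smult_le le_less_trans by blast
qed

lemma lag_interp:
  assumes "finite X" "degree p < card X"
  shows "p = (\<Sum>x\<in>X. smult (poly p x) (lag X x))"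
proof (rule poly_eqI_degree[of X])
  fix z assume z: "z \<in> X"
  have "poly (\<Sum>x\<in>X. smult (poly p x) (lag X x)) z = (\<Sum>x\<in>X. poly p x * (if z = x then 1 else 0))"
    by (simp add: poly_sum poly_lag assms z cong: sum.cong)
  also have "\<dots> = poly p z" using z assms by (simp add: if_distrib sum.delta cong: if_cong)
  finally show "poly p z = poly (\<Sum>x\<in>X. smult (poly p x) (lag X x)) z" by simp
next
  show "degree p < card X" by fact
  show "degree (\<Sum>x\<in>X. smult (poly p x) (lag X x)) < card X"
  proof -
    have "card X > 0" using assms by linarith
    have "degree (\<Sum>x\<in>X. smult (poly p x) (lag X x)) \<le> card X - 1"
      apply (rule degree_sum_le[OF assms(1)])
      using degree_lag[OF assms(1)] degree_smult_le
      by (metis Suc_pred' \<open>card X > 0\<close> le_trans less_Suc_eq_le)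
    then show ?thesis using \<open>card X > 0\<close> by linarith
  qed
qed

definition Tf :: "real poly \<Rightarrow> real \<Rightarrow> real" where
  "Tf q b = poly q b - poly q (-b) - 2 * b * coeff q 1"

definition Sc :: "real poly \<Rightarrow> real" where
  "Sc q = (\<Sum>k\<le>degree q. \<bar>coeff q k\<bar>)"

lemma Sc_nonneg: "Sc q \<ge> 0" unfolding Sc_def by (simp add: sum_nonneg)

lemma w_bound:
  fixes b :: real assumes "\<bar>b\<bar> \<le> 1"
  shows "\<bar>b^k - (-b)^k - (if k = 1 then 2*b else 0)\<bar> \<le> 2 * \<bar>b\<bar>^3"
proof (cases "k \<le> 2")
  case True
  then have "k = 0 \<or> k = 1 \<or> k = 2" by auto
  then show ?thesis by auto
next
  case False
  have "\<bar>b^k - (-b)^k\<bar> \<le> \<bar>b\<bar>^k + \<bar>b\<bar>^k"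
    by (metis abs_minus_cancel abs_triangle_ineq4 power_abs)
  also have "\<bar>b\<bar>^k \<le> \<bar>b\<bar>^3" using False assms by (intro power_decreasing) auto
  finally show ?thesis using False by auto
qed

lemma Tf_bound:
  assumes "\<bar>b\<bar> \<le> 1"
  shows "\<bar>Tf q b\<bar> \<le> 2 * Sc q * \<bar>b\<bar>^3"
proof -
  let ?d = "degree q"
  have c1: "coeff q 1 = (\<Sum>k\<le>?d. (if k = 1 then coeff q k else 0))"
    by (cases "?d = 0") (auto simp: coeff_eq_0)
  have e: "\<And>k. coeff q k * (b^k - (-b)^k - (if k = 1 then 2*b else 0)) =
     coeff q k * b^k - coeff q k * (-b)^k - 2 * b * (if k = 1 then coeff q k else 0)"
    by (simp add: algebra_simps)
  have "Tf q b = (\<Sum>k\<le>?d. coeff q k * (b^k - (-b)^k - (if k = 1 then 2*b else 0)))"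
    unfolding e sum_subtractf sum_distrib_left[symmetric] Tf_def poly_altdef c1[symmetric] by simp
  also have "\<bar>\<dots>\<bar> \<le> (\<Sum>k\<le>?d. \<bar>coeff q k\<bar> * (2 * \<bar>b\<bar>^3))"
    apply (rule order_trans[OF sum_abs], rule sum_mono)
    apply (simp only: abs_mult)
    apply (rule mult_left_mono[OF w_bound[OF assms]])
    by simp
  also have "\<dots> = 2 * Sc q * \<bar>b\<bar>^3" unfolding Sc_def
    by (simp add: sum_distrib_left[symmetric] sum_distrib_right[symmetric] mult_ac)
  finally show ?thesis .
qed

lemma Tf_interp:
  assumes "finite X" "degree p < card X" "\<And>x. x \<in> X \<Longrightarrow> \<bar>poly p x\<bar> \<le> B" "\<bar>b\<bar> \<le> 1"
  shows "\<bar>Tf p b\<bar> \<le> 2 * B * (\<Sum>x\<in>X. Sc (lag X x)) * \<bar>b\<bar>^3"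
proof -
  have "X \<noteq> {}" using assms(2) by auto
  then obtain x0 where "x0 \<in> X" by auto
  then have B0: "B \<ge> 0" using assms(3)[of x0] by linarith
  have "Tf p b = Tf (\<Sum>x\<in>X. smult (poly p x) (lag X x)) b"
    using lag_interp[OF assms(1,2)] by simp
  also have "\<dots> = (\<Sum>x\<in>X. poly p x * Tf (lag X x) b)"
    by (simp add: Tf_def poly_sum coeff_sum sum_subtractf sum_distrib_left algebra_simps sum.distrib)
  also have "\<bar>\<dots>\<bar> \<le> (\<Sum>x\<in>X. B * (2 * Sc (lag X x) * \<bar>b\<bar>^3))"
    apply (rule order_trans[OF sum_abs], rule sum_mono)
    apply (simp only: abs_mult)
    apply (rule mult_mono)
    using assms B0 Tf_bound[OF assms(4)] by auto
  also have "\<dots> = 2 * B * (\<Sum>x\<in>X. Sc (lag X x)) * \<bar>b\<bar>^3"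
    by (simp add: sum_distrib_left sum_distrib_right algebra_simps)
  finally show ?thesis .
qed



definition fb :: "real \<Rightarrow> real \<Rightarrow> real" where
  "fb b x = x^5 - 2*b^2*x^3 + 3/4*b^4*x + b^4*x^3/(x^2+b^2)"
definition f1b :: "real \<Rightarrow> real \<Rightarrow> real" where
  "f1b b x = 5*x^4 - 6*b^2*x^2 + 3/4*b^4 + b^4*(x^4 + 3*b^2*x^2)/(x^2+b^2)^2"
definition f2b :: "real \<Rightarrow> real \<Rightarrow> real" where
  "f2b b x = (20*x^3 - 12*b^2*x) + 2*b^6*x*(3*b^2 - x^2)/(x^2+b^2)^3"

lemma den_pos: "b > 0 \<Longrightarrow> x^2 + b^2 > (0::real)"
  by (intro add_nonneg_pos) auto

lemma deriv1:
  assumes "b > 0"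
  shows "(fb b has_real_derivative f1b b x) (at x)"
proof -
  have d: "x^2 + b^2 \<noteq> 0" using den_pos[OF assms, of x] by linarith
  have "(fb b has_real_derivative
     (5*x^4 - 2*b^2*(3*x^2) + 3/4*b^4 + b^4*((3*x^2)*(x^2+b^2) - x^3*(2*x))/(x^2+b^2)^2)) (at x)"
    unfolding fb_def
    apply (rule derivative_eq_intros refl)+
    apply (use d in simp)
    apply (rule refl)
    using d apply simp
    apply (subst power2_eq_square[of "x^2+b^2"])
    apply (rule arg_cong2[where f="(/)"])
     apply algebra
    by simp
  moreover have "(3*x^2)*(x^2+b^2) - x^3*(2*x) = x^4 + 3*b^2*x^2"
    by algebra
  ultimately show ?thesis unfolding f1b_def by (simp add: mult.assoc)
qed

lemma deriv2:
  assumes "b > 0"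
  shows "(f1b b has_real_derivative f2b b x) (at x)"
proof -
  have d: "x^2 + b^2 \<noteq> 0" using den_pos[OF assms, of x] by linarith
  have D: "(f1b b has_real_derivative
     (20*x^3 - 6*b^2*(2*x) + b^4*((4*x^3 + 3*b^2*(2*x))*(x^2+b^2)^2 - (x^4+3*b^2*x^2)*(2*(x^2+b^2)*(2*x)))/((x^2+b^2)^2)^2)) (at x)"
    unfolding f1b_def
    apply (rule derivative_eq_intros refl)+
    apply (use d in simp)
    apply (rule refl)
    using d assms by (simp add: field_simps; algebra)
  have t1: "(4*x^3 + 3*b^2*(2*x))*(x^2+b^2)^2 - (x^4+3*b^2*x^2)*(2*(x^2+b^2)*(2*x))
     = (x^2+b^2) * (2*b^2*x*(3*b^2 - x^2))"
    by algebra
  have t2: "b^4 * ((x^2+b^2) * (2*b^2*x*(3*b^2 - x^2))) / ((x^2+b^2)^2)^2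
      = 2*b^6*x*(3*b^2 - x^2)/(x^2+b^2)^3"
  proof -
    have "((x^2+b^2)^2)^2 = (x^2+b^2) * (x^2+b^2)^3" by algebra
    moreover have "b^4 * ((x^2+b^2) * (2*b^2*x*(3*b^2 - x^2))) = (x^2+b^2) * (2*b^6*x*(3*b^2 - x^2))"
      by algebra
    ultimately show ?thesis using d by simp
  qed
  have "(20*x^3 - 6*b^2*(2*x) + b^4*((4*x^3 + 3*b^2*(2*x))*(x^2+b^2)^2 - (x^4+3*b^2*x^2)*(2*(x^2+b^2)*(2*x)))/((x^2+b^2)^2)^2)
     = 20*x^3 - 6*b^2*(2*x) + b^4*((x^2+b^2) * (2*b^2*x*(3*b^2 - x^2)))/((x^2+b^2)^2)^2"
    by (simp only: t1)
  also have "\<dots> = 20*x^3 - 6*b^2*(2*x) + 2*b^6*x*(3*b^2 - x^2)/(x^2+b^2)^3"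
    by (simp only: t2)
  also have "\<dots> = f2b b x" unfolding f2b_def by simp
  finally show ?thesis using D by simp
qed

lemma cont_f2b: "(b::real) > 0 \<Longrightarrow> continuous_on S (f2b b)"
  unfolding f2b_def
  by (intro continuous_intros) (use den_pos in force)

lemma fb_factor: "(b::real) > 0 \<Longrightarrow> fb b x = x * ((x^2 - b^2)^2 - b^4/4 + b^4 * x^2/(x^2+b^2))"
proof -
  assume b: "b > 0"
  have d: "x^2 + b^2 \<noteq> 0" using den_pos[OF b, of x] by linarith
  have "x * (b^4 * x^2/(x^2+b^2)) = b^4*x^3/(x^2+b^2)" by (simp add: power3_eq_cube power2_eq_square)
  moreover have "x * ((x^2 - b^2)^2 - b^4/4) = x^5 - 2*b^2*x^3 + 3/4*b^4*x" by algebra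
  ultimately show ?thesis unfolding fb_def by (simp add: distrib_left power3_eq_cube power2_eq_square)
qed

lemma fb_inner_nonneg:
  fixes b x :: real
  assumes b: "b > 0"
  shows "(x^2 - b^2)^2 - b^4/4 + b^4 * x^2/(x^2+b^2) \<ge> 0"
proof (cases "x^2 \<le> b^2/2")
  case True
  have "b^2/2 \<le> b^2 - x^2" using True by simp
  then have "(b^2/2)^2 \<le> (b^2 - x^2)^2" by (intro power_mono) (use b in auto)
  then have "b^4/4 \<le> (x^2 - b^2)^2" by (simp add: power2_eq_square power4_eq_xxxx algebra_simps)
  moreover have "b^4 * x^2/(x^2+b^2) \<ge> 0" using den_pos[OF b, of x] by simp
  ultimately show ?thesis by linarith
next
  case False
  have dp: "x^2 + b^2 > 0" using den_pos[OF b] .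
  have "x^2/(x^2+b^2) \<ge> 1/3" using False dp by (simp add: field_simps)
  then have "b^4 * (x^2/(x^2+b^2)) \<ge> b^4 * (1/3)" by (intro mult_left_mono) auto
  moreover have "(x^2 - b^2)^2 \<ge> 0" by simp
  moreover have "b^4 > 0" using b by simp
  moreover have "b^4 * x^2/(x^2+b^2) = b^4*(x^2/(x^2+b^2))" by simp
  ultimately show ?thesis by linarith
qed

lemma fb_sign:
  fixes b x :: real
  assumes "b > 0"
  shows "x \<le> 0 \<Longrightarrow> fb b x \<le> 0" "x \<ge> 0 \<Longrightarrow> fb b x \<ge> 0"
  using fb_factor[OF assms, of x] fb_inner_nonneg[OF assms, of x]
  by (simp_all add: mult_nonpos_nonneg)

lemma E_bound:
  fixes b x :: real
  assumes b: "b > 0"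
  shows "\<bar>2*b^6*x*(3*b^2 - x^2)/(x^2+b^2)^3\<bar> \<le> 6*b^3"
proof -
  let ?s = "x^2 + b^2"
  have s: "?s > 0" using den_pos[OF b] .
  have h1: "\<bar>x\<bar> * b \<le> ?s"
  proof -
    have "0 \<le> (\<bar>x\<bar> - b)^2" by simp
    then have "2 * (\<bar>x\<bar> * b) \<le> \<bar>x\<bar>^2 + b^2" by (simp add: power2_eq_square algebra_simps)
    moreover have "\<bar>x\<bar> * b \<ge> 0" using b by simp
    ultimately show ?thesis by simp
  qed
  have h2: "\<bar>3*b^2 - x^2\<bar> \<le> 3 * ?s" by (simp add: abs_le_iff)
  have h3: "2*b^2 \<le> 2 * ?s" by simp
  have e1: "\<bar>2*b^6*x*(3*b^2 - x^2)\<bar> = 2*b^6*\<bar>x\<bar>*\<bar>3*b^2 - x^2\<bar>"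
    using b by (simp add: abs_mult)
  have "\<bar>2*b^6*x*(3*b^2 - x^2)\<bar> * b = b^4 * ((\<bar>x\<bar> * b) * \<bar>3*b^2 - x^2\<bar> * (2*b^2))"
    unfolding e1 by algebra
  also have "\<dots> \<le> b^4 * (?s * (3*?s) * (2*?s))"
    apply (intro mult_left_mono mult_mono h1 h2 h3)
    using b s by auto
  also have "\<dots> = 6 * b^4 * ?s^3" by algebra
  finally have "\<bar>2*b^6*x*(3*b^2 - x^2)\<bar> * b \<le> 6 * b^4 * ?s^3" .
  then have "\<bar>2*b^6*x*(3*b^2 - x^2)\<bar> \<le> 6 * b^3 * ?s^3"
    using b by (simp add: power_def mult_ac)
  then show ?thesis using s by (simp add: abs_divide divide_le_eq)
qed

lemma diff4_expand: "diff4 g h x = g x - 4*g(x+h) + 6*g(x+2*h) - 4*g(x+3*h) + g(x+4*h)"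
  unfolding diff4_def by (simp add: eval_nat_numeral atMost_Suc algebra_simps)

lemma omega_bound:
  fixes b :: real
  assumes b: "b > 0"
  shows "omega4 (f2b b) 1 \<le> 96*b^3"
proof -
  define Cc where "Cc = (\<lambda>y::real. 20*y^3 - 12*b^2*y)"
  define Ee where "Ee = (\<lambda>y::real. 2*b^6*y*(3*b^2 - y^2)/(y^2+b^2)^3)"
  have f2: "f2b b = (\<lambda>y. Cc y + Ee y)" unfolding f2b_def Cc_def Ee_def by auto
  have Eb: "\<And>y. \<bar>Ee y\<bar> \<le> 6*b^3" unfolding Ee_def by (rule E_bound[OF b])
  have C0: "\<And>h x. diff4 Cc h x = 0" unfolding diff4_expand Cc_def by (simp add: algebra_simps power3_eq_cube power2_eq_square)
  have dsum: "\<And>h x. diff4 (f2b b) h x = diff4 Cc h x + diff4 Ee h x"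
    unfolding f2 diff4_expand by simp
  show ?thesis
    unfolding omega4_def
  proof (rule cSUP_least)
    show "{(h, x). 0 < h \<and> h \<le> (1::real) \<and> -1 \<le> x \<and> x + 4 * h \<le> 1} \<noteq> {}"
    proof -
      have "(1/2, -1) \<in> {(h, x). 0 < h \<and> h \<le> (1::real) \<and> -1 \<le> x \<and> x + 4 * h \<le> 1}" by simp
      then show ?thesis by (metis empty_iff)
    qed
  next
    fix p assume "p \<in> {(h, x). 0 < h \<and> h \<le> (1::real) \<and> -1 \<le> x \<and> x + 4 * h \<le> 1}"
    obtain h x where p: "p = (h, x)" by (cases p)
    have "\<bar>diff4 (f2b b) h x\<bar> = \<bar>diff4 Ee h x\<bar>" using dsum C0 by simp
    also have "\<dots> \<le> \<bar>Ee x\<bar> + 4*\<bar>Ee(x+h)\<bar> + 6*\<bar>Ee(x+2*h)\<bar> + 4*\<bar>Ee(x+3*h)\<bar> + \<bar>Ee(x+4*h)\<bar>"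
      unfolding diff4_expand by linarith
    also have "\<dots> \<le> 96*b^3" using Eb[of x] Eb[of "x+h"] Eb[of "x+2*h"] Eb[of "x+3*h"] Eb[of "x+4*h"] by linarith
    finally show "(case p of (h, x) \<Rightarrow> \<bar>diff4 (f2b b) h x\<bar>) \<le> 96*b^3" using p by simp
  qed
qed

lemma small_frac:
  fixes b x :: real assumes b: "b > 0" and x: "\<bar>x\<bar> \<le> 1"
  shows "\<bar>b^4*x^3/(x^2+b^2)\<bar> \<le> b^4"
proof -
  have s: "x^2 + b^2 > 0" using den_pos[OF b] .
  have "\<bar>x^3\<bar> = \<bar>x\<bar> * x^2" by (simp add: power3_eq_cube power2_eq_square abs_mult)
  also have "\<dots> \<le> 1 * x^2" by (intro mult_right_mono x) simp
  also have "\<dots> \<le> x^2 + b^2" by simp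
  finally have "\<bar>x^3\<bar> \<le> x^2 + b^2" .
  then have "\<bar>x^3/(x^2+b^2)\<bar> \<le> 1" using s by (simp add: abs_divide)
  then have "b^4 * \<bar>x^3/(x^2+b^2)\<bar> \<le> b^4 * 1" by (intro mult_left_mono) auto
  then show ?thesis by (simp add: abs_mult)
qed

theorem lemma3p11:
  fixes n :: nat and A :: real
  assumes "A > 0"
  shows "\<exists>f f1 f2. C2_on11 f f1 f2 \<and>
           (\<forall>x\<in>{-1..0}. f x \<le> 0) \<and> (\<forall>x\<in>{0..1}. f x \<ge> 0) \<and>
           (\<forall>P :: real poly. degree P \<le> n \<and>
                (\<forall>x\<in>{-1..0}. poly P x \<le> 0) \<and> (\<forall>x\<in>{0..1}. poly P x \<ge> 0) \<and>
                poly P 0 = f 0 \<and> poly (pderiv P) 0 = f1 0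
              \<longrightarrow> sup_norm11 (\<lambda>x. f x - poly P x) > A * omega4 f2 1)"
proof -
  define N where "N = max n 5"
  define X where "X = (\<lambda>k. real k / real (Suc N)) ` {..N}"
  have finX: "finite X" by (simp add: X_def)
  have cardX: "card X = Suc N"
    unfolding X_def by (subst card_image) (auto simp: inj_on_def)
  have Xsub: "\<And>x. x \<in> X \<Longrightarrow> \<bar>x\<bar> \<le> 1"
    unfolding X_def by auto
  define Kc where "Kc = (\<Sum>x\<in>X. Sc (lag X x)) + 1"
  have Kc1: "Kc \<ge> 1" unfolding Kc_def using Sc_nonneg by (simp add: sum_nonneg)
  define b where "b = min (1/2) (1/(8*Kc*(1+96*A)))"
  have pos: "8*Kc*(1+96*A) > 0" using Kc1 assms by simp
  have b0: "b > 0" unfolding b_def using pos by simp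
  have b1: "b \<le> 1/2" unfolding b_def by simp
  have b2: "b \<le> 1/(8*Kc*(1+96*A))" unfolding b_def by simp
  have b3: "Kc * b * (1+96*A) \<le> 1/8"
  proof -
    have "b * (8*Kc*(1+96*A)) \<le> 1" using b2 pos by (simp add: le_divide_eq)
    then show ?thesis by (simp add: algebra_simps)
  qed
  define q5 where "q5 = [:0, 3/4*b^4, 0, -2*b^2, 0, 1:]"
  have poly_q5: "\<And>x. poly q5 x = x^5 - 2*b^2*x^3 + 3/4*b^4*x"
    by (simp add: q5_def; algebra)
  have fq: "\<And>x. fb b x = poly q5 x + b^4*x^3/(x^2+b^2)"
    unfolding fb_def poly_q5 by simp
  have deg_q5: "degree q5 \<le> 5" unfolding q5_def by simp
  have coeff_q5: "coeff q5 1 = 3/4*b^4" by (simp add: q5_def)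
  have C2: "C2_on11 (fb b) (f1b b) (f2b b)"
    unfolding C2_on11_def
    using deriv1[OF b0] deriv2[OF b0] cont_f2b[OF b0] has_field_derivative_at_within by blast
  have isc: "\<And>x. isCont (fb b) x" using deriv1[OF b0] DERIV_isCont by blast
  have om: "omega4 (f2b b) 1 \<le> 96*b^3" by (rule omega_bound[OF b0])
  show ?thesis
  proof (intro exI conjI allI impI ballI)
    show "C2_on11 (fb b) (f1b b) (f2b b)" by (rule C2)
  next
    fix x :: real assume "x \<in> {-1..0}" then show "fb b x \<le> 0" using fb_sign[OF b0] by simp
  next
    fix x :: real assume "x \<in> {0..1}" then show "fb b x \<ge> 0" using fb_sign[OF b0] by simp
  next
    fix P :: "real poly"
    assume H: "degree P \<le> n \<and> (\<forall>x\<in>{-1..0}. poly P x \<le> 0) \<and> (\<forall>x\<in>{0..1}. poly P x \<ge> 0) \<and>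
                poly P 0 = fb b 0 \<and> poly (pderiv P) 0 = f1b b 0"
    define M where "M = sup_norm11 (\<lambda>x. fb b x - poly P x)"
    have cont: "continuous_on {-1..1} (\<lambda>x. \<bar>fb b x - poly P x\<bar>)"
      by (intro continuous_at_imp_continuous_on ballI continuous_intros isc)
    have bdd: "bdd_above ((\<lambda>x. \<bar>fb b x - poly P x\<bar>) ` {-1..1})"
      by (intro bounded_imp_bdd_above compact_imp_bounded compact_continuous_image cont) simp
    have Mb: "\<And>x. x \<in> {-1..1} \<Longrightarrow> \<bar>fb b x - poly P x\<bar> \<le> M"
      unfolding M_def sup_norm11_def by (rule cSUP_upper[OF _ bdd])
    have M0: "M \<ge> 0" using Mb[of 0] by simp
    define D where "D = P - q5"
    have degD: "degree D < card X"
    proof -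
      have "degree D \<le> max (degree P) (degree q5)" unfolding D_def by (rule degree_diff_le_max)
      also have "\<dots> \<le> N" using H deg_q5 unfolding N_def by auto
      finally show ?thesis using cardX by simp
    qed
    have DX: "\<And>x. x \<in> X \<Longrightarrow> \<bar>poly D x\<bar> \<le> M + b^4"
    proof -
      fix x assume "x \<in> X"
      then have x1: "\<bar>x\<bar> \<le> 1" by (rule Xsub)
      have "poly D x = - (fb b x - poly P x) + b^4*x^3/(x^2+b^2)"
        unfolding D_def using fq[of x] by simp
      also have "\<bar>\<dots>\<bar> \<le> \<bar>fb b x - poly P x\<bar> + \<bar>b^4*x^3/(x^2+b^2)\<bar>" by linarith
      also have "\<dots> \<le> M + b^4"
      proof -
        have "x \<in> {-1..1}" using x1 by (auto simp: abs_le_iff)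
        then show ?thesis using Mb[of x] small_frac[OF b0 x1] by linarith
      qed
      finally show "\<bar>poly D x\<bar> \<le> M + b^4" .
    qed
    have cP: "coeff P 1 = 3/4*b^4"
    proof -
      have "poly (pderiv P) 0 = coeff P 1" by (simp add: poly_0_coeff_0 coeff_pderiv)
      moreover have "f1b b 0 = 3/4*b^4" by (simp add: f1b_def)
      ultimately show ?thesis using H by simp
    qed
    have Pb: "poly P b \<ge> 0" using H b0 b1 by simp
    have Pmb: "poly P (-b) \<le> 0" using H b0 b1 by simp
    have Tlow: "Tf D b \<ge> b^5/2"
    proof -
      have q1: "poly q5 b = -(b^5/4)" unfolding poly_q5 by (simp add: power_numeral_reduce field_simps)
      have q2: "poly q5 (-b) = b^5/4" unfolding poly_q5 by (simp add: power_numeral_reduce field_simps)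
      have c0: "coeff D 1 = 0" unfolding D_def using cP coeff_q5 by simp
      have "Tf D b = (poly P b - poly q5 b) - (poly P (-b) - poly q5 (-b)) - 2*b*coeff D 1"
        unfolding Tf_def D_def by simp
      also have "\<dots> = poly P b - poly P (-b) + b^5/2" unfolding q1 q2 c0 by simp
      finally have "Tf D b = poly P b - poly P (-b) + b^5/2" .
      then show ?thesis using Pb Pmb by simp
    qed
    have Tup: "\<bar>Tf D b\<bar> \<le> 2 * (M + b^4) * (\<Sum>x\<in>X. Sc (lag X x)) * \<bar>b\<bar>^3"
      by (rule Tf_interp[OF finX degD DX]) (use b0 b1 in auto)
    have Tup2: "b^5/2 \<le> 2 * (M + b^4) * Kc * b^3"
    proof -
      have "(\<Sum>x\<in>X. Sc (lag X x)) \<le> Kc" unfolding Kc_def by simp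
      then have "2 * (M + b^4) * (\<Sum>x\<in>X. Sc (lag X x)) * \<bar>b\<bar>^3 \<le> 2 * (M + b^4) * Kc * b^3"
      proof -
        have ab: "\<bar>b\<bar>^3 = b^3" using b0 by simp
        have "0 \<le> 2 * (M + b^4)" using M0 by simp
        then have "2 * (M + b^4) * (\<Sum>x\<in>X. Sc (lag X x)) \<le> 2 * (M + b^4) * Kc"
          by (rule mult_left_mono[OF \<open>(\<Sum>x\<in>X. Sc (lag X x)) \<le> Kc\<close>])
        then show ?thesis unfolding ab using b0 by (intro mult_right_mono) auto
      qed
      then show ?thesis using Tlow Tup by linarith
    qed
    have key: "b^2/4 \<le> (M + b^4) * Kc"
    proof -
      have "b^3 * (b^2/4) \<le> b^3 * ((M + b^4) * Kc)"
        using Tup2 by (simp add: power_numeral_reduce algebra_simps)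
      moreover have "b^3 > 0" using b0 by simp
      ultimately show ?thesis using mult_le_cancel_left_pos by blast
    qed
    have "96*A*b^3 < M"
    proof (rule ccontr)
      assume "\<not> 96*A*b^3 < M"
      then have "M \<le> 96*A*b^3" by simp
      then have "(M + b^4) * Kc \<le> (96*A*b^3 + b^4) * Kc" using Kc1 by (intro mult_right_mono) auto
      also have "\<dots> = b^2 * (Kc * b * (96*A + b))" by (simp add: power_numeral_reduce algebra_simps)
      also have "\<dots> \<le> b^2 * (Kc * b * (1 + 96*A))"
        using b0 b1 Kc1 by (intro mult_left_mono) auto
      also have "\<dots> \<le> b^2 * (1/8)" using b3 by (intro mult_left_mono) auto
      finally have F: "(M + b^4) * Kc \<le> b^2 * (1/8)" .
      have "b^2 > 0" using b0 by simp
      then show False using key F by linarith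
    qed
    moreover have "A * omega4 (f2b b) 1 \<le> A * (96*b^3)" using om assms by (intro mult_left_mono) auto
    ultimately show "A * omega4 (f2b b) 1 < sup_norm11 (\<lambda>x. fb b x - poly P x)"
      unfolding M_def by simp
  qed
qed

end
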